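(* Let $(\Omega,\mathcal{A},\mathbb{P})$ be a probability space and let $\mathcal{X}:\Omega\to\mathcal{F}_c(\mathbb{R})$ be a fuzzy random variable (no integrability assumption). Then for every support median $A\in\mathrm{Med}_s(\mathcal{X})$ and every $\alpha\in[0,1]$ we have $A_\alpha\subseteq(\mathrm{med}_{Gr}(\mathcal{X}))_\alpha$.
   Context: For a function $A:\mathbb{R}\to[0,1]$, its $\alpha$-levels are $A_\alpha=\{x: A(x)\ge\alpha\}$ for $\alpha\in(0,1]$ and $A_0$ is the closure of $\{x:A(x)>0\}$. $\mathcal{F}_c(\mathbb{R})$ is the set of such $A$ all of whose $\alpha$-levels are non-empty compact intervals. The support function of $A\in\mathcal{F}_c(\mathbb{R})$ is $s_A(u,\alpha)=\sup\{u v: v\in A_\alpha\}$ for $u\in\mathbb{S}^0=\{-1,1\}$, $\alpha\in[0,1]$; thus $A_\alpha=[-s_A(-1,\alpha),s_A(1,\alpha)]$. A fuzzy random variable is a map $\mathcal{X}:\Omega\to\mathcal{F}_c(\mathbb{R})$ such that for each $\alpha\in[0,1]$ the map $\omega\mapsto\mathcal{X}(\omega)_\alpha$ is a random compact set (i.e. $\{\omega:\mathcal{X}(\omega)_\alpha\cap K\neq\emptyset\}\in\mathcal{A}$ for every non-empty compact convex $K$); then $s_{\mathcal{X}}(u,\alpha)(\omega)=s_{\mathcal{X}(\omega)}(u,\alpha)$ is a real random variable. For a real random variable $X$, $\mathrm{Med}(X)=[\underline{\mathrm{med}}(X),\overline{\mathrm{med}}(X)]$ denotes the (closed interval) set of all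 medians of $X$. A support median of $\mathcal{X}$ is any $A\in\mathcal{F}_c(\mathbb{R})$ with $s_A(u,\alpha)\in\mathrm{Med}(s_{\mathcal{X}}(u,\alpha))$ for all $u\in\{-1,1\}$, $\alpha\in[0,1]$; their set is $\mathrm{Med}_s(\mathcal{X})$. The Grzegorzewski median $\mathrm{med}_{Gr}(\mathcal{X})$ is the fuzzy number with membership function $\mathrm{med}_{Gr}(\mathcal{X})(t)=\sup\{\inf_{\omega\in\Omega}\mathcal{X}(\omega)(X(\omega)) : X:\Omega\to\mathbb{R}\text{ Borel measurable},\ t\in\mathrm{Med}(X)\}$; it is known that it is the unique fuzzy number with $(\mathrm{med}_{Gr}(\mathcal{X}))_\alpha=[\underline{\mathrm{med}}(\inf\mathcal{X}_\alpha),\overline{\mathrm{med}}(\sup\mathcal{X}_\alpha)]$ for every $\alpha\in[0,1]$, where $\inf\mathcal{X}_\alpha$ and $\sup\mathcal{X}_\alpha$ denote the real random variables $\omega\mapsto\inf\mathcal{X}(\omega)_\alpha$ and $\omega\mapsto\sup\mathcal{X}(\omega)_\alpha$. *)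

theory Defs
  imports "HOL-Probability.Probability"
begin

definition fuzzy_set :: "(real \<Rightarrow> real) \<Rightarrow> bool" where
  "fuzzy_set A \<longleftrightarrow> (\<forall>x. 0 \<le> A x \<and> A x \<le> 1)"

definition level :: "(real \<Rightarrow> real) \<Rightarrow> real \<Rightarrow> real set" where
  "level A \<alpha> = (if \<alpha> = 0 then closure {x. A x > 0} else {x. \<alpha> \<le> A x})"

definition Fc :: "(real \<Rightarrow> real) set" where
  "Fc = {A. fuzzy_set A \<and> (\<forall>\<alpha>\<in>{0..1}. \<exists>a b. a \<le> b \<and> level A \<alpha> = {a..b})}"

definition supp_fun :: "(real \<Rightarrow> real) \<Rightarrow> real \<Rightarrow> real \<Rightarrow> real" where
  "supp_fun A u \<alpha> = Sup ((\<lambda>v. u * v) ` level A \<alpha>)"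

text \<open>Fuzzy random variable: each alpha-level is a random compact set.\<close>
definition fuzzy_random_variable :: "'a measure \<Rightarrow> ('a \<Rightarrow> real \<Rightarrow> real) \<Rightarrow> bool" where
  "fuzzy_random_variable M X \<longleftrightarrow>
     (\<forall>\<omega>\<in>space M. X \<omega> \<in> Fc) \<and>
     (\<forall>\<alpha>\<in>{0..1}. \<forall>K::real set. K \<noteq> {} \<and> compact K \<and> convex K \<longrightarrow>
        {\<omega>\<in>space M. level (X \<omega>) \<alpha> \<inter> K \<noteq> {}} \<in> sets M)"

definition medians :: "'a measure \<Rightarrow> ('a \<Rightarrow> real) \<Rightarrow> real set" where
  "medians M Y = {m. measure M {\<omega>\<in>space M. Y \<omega> \<le> m} \<ge> 1/2 \<and>
                     measure M {\<omega>\<in>space M. m \<le> Y \<omega>} \<ge> 1/2}"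

definition support_medians :: "'a measure \<Rightarrow> ('a \<Rightarrow> real \<Rightarrow> real) \<Rightarrow> (real \<Rightarrow> real) set" where
  "support_medians M X = {A. A \<in> Fc \<and> (\<forall>u\<in>{-1, 1::real}. \<forall>\<alpha>\<in>{0..1}.
       supp_fun A u \<alpha> \<in> medians M (\<lambda>\<omega>. supp_fun (X \<omega>) u \<alpha>))}"

definition med_Gr :: "'a measure \<Rightarrow> ('a \<Rightarrow> real \<Rightarrow> real) \<Rightarrow> real \<Rightarrow> real" where
  "med_Gr M X t = (SUP Y \<in> {Y. Y \<in> borel_measurable M \<and> t \<in> medians M Y}.
                     (INF \<omega>\<in>space M. X \<omega> (Y \<omega>)))"

end

theory Submission
  imports Defs
begin

lemma level_interval:
  assumes "B \<in> Fc" "\<alpha> \<in> {0..1}"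
  shows "level B \<alpha> = {Inf (level B \<alpha>) .. Sup (level B \<alpha>)}"
    "Inf (level B \<alpha>) \<le> Sup (level B \<alpha>)"
proof -
  obtain a b where ab: "a \<le> b" "level B \<alpha> = {a..b}" using assms unfolding Fc_def by blast
  then show "level B \<alpha> = {Inf (level B \<alpha>) .. Sup (level B \<alpha>)}"
    "Inf (level B \<alpha>) \<le> Sup (level B \<alpha>)" by auto
qed

lemma supp_fun_pos:
  assumes "B \<in> Fc" "\<alpha> \<in> {0..1}"
  shows "supp_fun B 1 \<alpha> = Sup (level B \<alpha>)"
  unfolding supp_fun_def by simp

lemma supp_fun_neg:
  assumes "B \<in> Fc" "\<alpha> \<in> {0..1}"
  shows "supp_fun B (-1) \<alpha> = - Inf (level B \<alpha>)"
proof -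
  obtain a b where ab: "a \<le> b" "level B \<alpha> = {a..b}" using assms unfolding Fc_def by blast
  have "(\<lambda>v. -1 * v) ` {a..b} = {-b..-a}" by auto
  then show ?thesis unfolding supp_fun_def using ab by simp
qed

lemma l_meas:
  assumes "fuzzy_random_variable M X" "\<alpha> \<in> {0..1}"
  shows "(\<lambda>\<omega>. Inf (level (X \<omega>) \<alpha>)) \<in> borel_measurable M"
  unfolding borel_measurable_iff_le
proof
  fix c :: real
  have eq: "{w \<in> space M. Inf (level (X w) \<alpha>) \<le> c} =
     (\<Union>n. {w \<in> space M. level (X w) \<alpha> \<inter> {c - real n .. c} \<noteq> {}})"
  proof (intro set_eqI iffI)
    fix w assume w: "w \<in> {w \<in> space M. Inf (level (X w) \<alpha>) \<le> c}"
    then have Fc: "X w \<in> Fc" using assms unfolding fuzzy_random_variable_def by auto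
    note li = level_interval[OF Fc assms(2)]
    obtain n :: nat where n: "c - Inf (level (X w) \<alpha>) \<le> real n" using real_arch_simple by blast
    have "Inf (level (X w) \<alpha>) \<in> level (X w) \<alpha> \<inter> {c - real n .. c}"
      using w n li by auto
    then show "w \<in> (\<Union>n. {w \<in> space M. level (X w) \<alpha> \<inter> {c - real n .. c} \<noteq> {}})"
      using w by blast
  next
    fix w assume w: "w \<in> (\<Union>n. {w \<in> space M. level (X w) \<alpha> \<inter> {c - real n .. c} \<noteq> {}})"
    then obtain x where w1: "w \<in> space M" and x1: "x \<in> level (X w) \<alpha>" and x2: "x \<le> c" by auto
    then have Fc: "X w \<in> Fc" using assms unfolding fuzzy_random_variable_def by auto
    have "x \<in> {Inf (level (X w) \<alpha>) .. Sup (level (X w) \<alpha>)}"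
      using level_interval(1)[OF Fc assms(2)] x1 by metis
    then show "w \<in> {w \<in> space M. Inf (level (X w) \<alpha>) \<le> c}"
      using w1 x2 by auto
  qed
  have "\<And>n. {w \<in> space M. level (X w) \<alpha> \<inter> {c - real n .. c} \<noteq> {}} \<in> sets M"
  proof -
    fix n
    have "{c - real n .. c} \<noteq> {}" by simp
    then show "{w \<in> space M. level (X w) \<alpha> \<inter> {c - real n .. c} \<noteq> {}} \<in> sets M"
      using assms compact_Icc[of "c - real n" c] convex_box(1)[of "c - real n" c]
      unfolding fuzzy_random_variable_def by blast
  qed
  then show "{w \<in> space M. Inf (level (X w) \<alpha>) \<le> c} \<in> sets M" unfolding eq by blast
qed

lemma r_meas:
  assumes "fuzzy_random_variable M X" "\<alpha> \<in> {0..1}"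
  shows "(\<lambda>\<omega>. Sup (level (X \<omega>) \<alpha>)) \<in> borel_measurable M"
  unfolding borel_measurable_iff_ge
proof
  fix c :: real
  have eq: "{w \<in> space M. c \<le> Sup (level (X w) \<alpha>)} =
     (\<Union>n. {w \<in> space M. level (X w) \<alpha> \<inter> {c .. c + real n} \<noteq> {}})"
  proof (intro set_eqI iffI)
    fix w assume w: "w \<in> {w \<in> space M. c \<le> Sup (level (X w) \<alpha>)}"
    then have Fc: "X w \<in> Fc" using assms unfolding fuzzy_random_variable_def by auto
    note li = level_interval[OF Fc assms(2)]
    obtain n :: nat where n: "Sup (level (X w) \<alpha>) - c \<le> real n" using real_arch_simple by blast
    have "Sup (level (X w) \<alpha>) \<in> level (X w) \<alpha> \<inter> {c .. c + real n}"
      using w n li by auto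
    then show "w \<in> (\<Union>n. {w \<in> space M. level (X w) \<alpha> \<inter> {c .. c + real n} \<noteq> {}})"
      using w by blast
  next
    fix w assume w: "w \<in> (\<Union>n. {w \<in> space M. level (X w) \<alpha> \<inter> {c .. c + real n} \<noteq> {}})"
    then obtain x where w1: "w \<in> space M" and x1: "x \<in> level (X w) \<alpha>" and x2: "c \<le> x" by auto
    then have Fc: "X w \<in> Fc" using assms unfolding fuzzy_random_variable_def by auto
    have "x \<in> {Inf (level (X w) \<alpha>) .. Sup (level (X w) \<alpha>)}"
      using level_interval(1)[OF Fc assms(2)] x1 by metis
    then show "w \<in> {w \<in> space M. c \<le> Sup (level (X w) \<alpha>)}"
      using w1 x2 by auto
  qed
  have "\<And>n. {w \<in> space M. level (X w) \<alpha> \<inter> {c .. c + real n} \<noteq> {}} \<in> sets M"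
  proof -
    fix n
    have "{c .. c + real n} \<noteq> {}" by simp
    then show "{w \<in> space M. level (X w) \<alpha> \<inter> {c .. c + real n} \<noteq> {}} \<in> sets M"
      using assms compact_Icc[of c "c + real n"] convex_box(1)[of c "c + real n"]
      unfolding fuzzy_random_variable_def by blast
  qed
  then show "{w \<in> space M. c \<le> Sup (level (X w) \<alpha>)} \<in> sets M" unfolding eq by blast
qed

lemma main:
  assumes P: "prob_space M" and F: "fuzzy_random_variable M X" and A: "A \<in> support_medians M X"
    and a0: "0 < \<alpha>" and a1: "\<alpha> \<le> 1" and t: "t \<in> level A \<alpha>"
  shows "\<alpha> \<le> med_Gr M X t"
proof -
  have al: "\<alpha> \<in> {0..1}" using a0 a1 by auto
  define l where "l \<omega> = Inf (level (X \<omega>) \<alpha>)" for \<omega>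
  define r where "r \<omega> = Sup (level (X \<omega>) \<alpha>)" for \<omega>
  define Y where "Y \<omega> = max (l \<omega>) (min (r \<omega>) t)" for \<omega>
  have AFc: "A \<in> Fc" using A unfolding support_medians_def by auto
  have medr: "supp_fun A 1 \<alpha> \<in> medians M (\<lambda>\<omega>. supp_fun (X \<omega>) 1 \<alpha>)"
    and medl: "supp_fun A (-1) \<alpha> \<in> medians M (\<lambda>\<omega>. supp_fun (X \<omega>) (-1) \<alpha>)"
    using A al unfolding support_medians_def by auto
  define a where "a = Inf (level A \<alpha>)"
  define b where "b = Sup (level A \<alpha>)"
  have "t \<in> {a..b}" using level_interval(1)[OF AFc al] t unfolding a_def b_def by metis
  then have tab: "a \<le> t" "t \<le> b" by auto
  have XFc: "\<And>\<omega>. \<omega> \<in> space M \<Longrightarrow> X \<omega> \<in> Fc"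
    using F unfolding fuzzy_random_variable_def by auto
  have lr: "\<And>\<omega>. \<omega> \<in> space M \<Longrightarrow> l \<omega> \<le> r \<omega>"
    using level_interval(2)[OF XFc al] unfolding l_def r_def by auto
  have lev: "\<And>\<omega>. \<omega> \<in> space M \<Longrightarrow> level (X \<omega>) \<alpha> = {l \<omega> .. r \<omega>}"
    using level_interval(1)[OF XFc al] unfolding l_def r_def by auto
  have e1: "{\<omega>\<in>space M. supp_fun A 1 \<alpha> \<le> supp_fun (X \<omega>) 1 \<alpha>} = {\<omega>\<in>space M. b \<le> r \<omega>}"
    using supp_fun_pos[OF AFc al] supp_fun_pos[OF XFc al] unfolding r_def b_def by auto
  have e2: "{\<omega>\<in>space M. supp_fun A (-1) \<alpha> \<le> supp_fun (X \<omega>) (-1) \<alpha>} = {\<omega>\<in>space M. l \<omega> \<le> a}"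
    using supp_fun_neg[OF AFc al] supp_fun_neg[OF XFc al] unfolding l_def a_def by auto
  have h1: "1/2 \<le> measure M {\<omega>\<in>space M. b \<le> r \<omega>}"
    using medr e1 unfolding medians_def by auto
  have h2: "1/2 \<le> measure M {\<omega>\<in>space M. l \<omega> \<le> a}"
    using medl e2 unfolding medians_def by auto
  have lm: "l \<in> borel_measurable M" using l_meas[OF F al] unfolding l_def .
  have rm: "r \<in> borel_measurable M" using r_meas[OF F al] unfolding r_def .
  have Ym: "Y \<in> borel_measurable M" unfolding Y_def
    using lm rm by (intro borel_measurable_max borel_measurable_min) auto
  have fm: "finite_measure M" using P prob_space.finite_measure by blast
  have s1: "{\<omega>\<in>space M. Y \<omega> \<le> t} = {\<omega>\<in>space M. l \<omega> \<le> t}"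
    unfolding Y_def using lr by auto
  have s2: "{\<omega>\<in>space M. t \<le> Y \<omega>} = {\<omega>\<in>space M. t \<le> r \<omega>}"
  proof -
    have "t \<le> Y \<omega> \<longleftrightarrow> t \<le> r \<omega>" if "\<omega> \<in> space M" for \<omega>
      using lr[OF that] unfolding Y_def by (auto simp: max_def min_def)
    then show ?thesis by auto
  qed
  have "measure M {\<omega>\<in>space M. l \<omega> \<le> a} \<le> measure M {\<omega>\<in>space M. l \<omega> \<le> t}"
    apply (rule finite_measure.finite_measure_mono[OF fm])
    using tab apply auto[1]
    using lm borel_measurable_iff_le by blast
  moreover have "measure M {\<omega>\<in>space M. b \<le> r \<omega>} \<le> measure M {\<omega>\<in>space M. t \<le> r \<omega>}"
    apply (rule finite_measure.finite_measure_mono[OF fm])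
    using tab apply auto[1]
    using rm borel_measurable_iff_ge by blast
  ultimately have Ymed: "t \<in> medians M Y"
    unfolding medians_def using s1 s2 h1 h2 by auto
  have Ymem: "\<alpha> \<le> X \<omega> (Y \<omega>)" if w: "\<omega> \<in> space M" for \<omega>
  proof -
    have "Y \<omega> \<in> level (X \<omega>) \<alpha>" using lev[OF w] lr[OF w] unfolding Y_def by auto
    then show ?thesis using a0 unfolding level_def by auto
  qed
  have ne: "space M \<noteq> {}" using P prob_space.not_empty by blast
  have inf_ge: "\<alpha> \<le> (INF \<omega>\<in>space M. X \<omega> (Y \<omega>))"
    using ne Ymem by (rule cINF_greatest)
  have fz: "\<And>\<omega> x. \<omega> \<in> space M \<Longrightarrow> 0 \<le> X \<omega> x \<and> X \<omega> x \<le> 1"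
    using XFc unfolding Fc_def fuzzy_set_def by auto
  have bdd: "bdd_above ((\<lambda>Y. INF \<omega>\<in>space M. X \<omega> (Y \<omega>)) ` {Y. Y \<in> borel_measurable M \<and> t \<in> medians M Y})"
  proof (rule bdd_aboveI2)
    fix Z
    obtain \<omega>0 where w0: "\<omega>0 \<in> space M" using ne by blast
    have "bdd_below ((\<lambda>\<omega>. X \<omega> (Z \<omega>)) ` space M)"
      using fz by (intro bdd_belowI2[where m=0]) auto
    then show "(INF \<omega>\<in>space M. X \<omega> (Z \<omega>)) \<le> 1"
      using w0 fz by (intro cINF_lower2[where x=\<omega>0]) auto
  qed
  show ?thesis unfolding med_Gr_def
    using Ym Ymed inf_ge by (intro cSUP_upper2[OF bdd, where x=Y]) auto
qed

theorem proposition3p2: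
  fixes M :: "'a measure" and X :: "'a \<Rightarrow> real \<Rightarrow> real"
    and A :: "real \<Rightarrow> real" and \<alpha> :: real
  assumes "prob_space M"
    and "fuzzy_random_variable M X"
    and "A \<in> support_medians M X"
    and "\<alpha> \<in> {0..1}"
  shows "level A \<alpha> \<subseteq> level (med_Gr M X) \<alpha>"
proof (cases "\<alpha> = 0")
  case False
  then have "0 < \<alpha>" "\<alpha> \<le> 1" using assms(4) by auto
  then show ?thesis using main[OF assms(1-3)] False unfolding level_def[of "med_Gr M X"]
    by auto
next
  case True
  have AFc: "A \<in> Fc" using assms(3) unfolding support_medians_def by auto
  have "{x. A x > 0} \<subseteq> {x. med_Gr M X x > 0}"
  proof
    fix x assume x: "x \<in> {x. A x > 0}"
    then have "A x \<le> 1" using AFc unfolding Fc_def fuzzy_set_def by auto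
    moreover have "x \<in> level A (A x)" using x unfolding level_def by auto
    ultimately have "A x \<le> med_Gr M X x" using x main[OF assms(1-3)] by auto
    then show "x \<in> {x. med_Gr M X x > 0}" using x by auto
  qed
  then show ?thesis using True unfolding level_def by (simp add: closure_mono)
qed

end
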